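(* Let $\Gamma$ be a graph and let $K_1,\dots,K_n$ be finitely many finite graphs. (1) If $\Gamma$ contains a finite set of vertices $X$ such that every subgraph of $\Gamma$ isomorphic to one of the $K_i$ has at least one vertex in $X$, then $\Gamma$ contains a finite set of vertices $Y$, invariant under all automorphisms of $\Gamma$, such that every subgraph of $\Gamma$ isomorphic to one of the $K_i$ has at least one vertex in $Y$, and $|Y|\le |X|\cdot\max_i(\text{number of vertices of }K_i)$. (2) If $\Gamma$ contains a finite set of edges $X$ such that every subgraph of $\Gamma$ isomorphic to one of the $K_i$ has at least one edge in $X$, then $\Gamma$ contains a finite set of edges $Y$, invariant under all automorphisms of $\Gamma$, such that every subgraph of $\Gamma$ isomorphic to one of the $K_i$ has at least one edge in $Y$, and $|Y|\le |X|\cdot\max_i(\text{number of edges of }K_i)$.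
   Context: "Graph" may be understood in any of the usual senses (directed, undirected, or mixed; multiple edges and/or loops allowed or not), fixed throughout; isomorphisms and automorphisms preserve the corresponding structure. "Subgraph" means an arbitrary (not necessarily induced) subgraph. $\Gamma$ may be infinite. *)

theory Defs
  imports Main
begin

text \<open>Graphs are taken in the sense of directed multigraphs with loops allowed:
  a vertex set, an edge set, and source/target maps (only meaningful on edges).\<close>

record ('v, 'e) graph =
  verts :: "'v set"
  edges :: "'e set"
  src :: "'e \<Rightarrow> 'v"
  tgt :: "'e \<Rightarrow> 'v"

definition wf_graph :: "('v, 'e) graph \<Rightarrow> bool" where
  "wf_graph G \<longleftrightarrow> (\<forall>e\<in>edges G. src G e \<in> verts G \<and> tgt G e \<in> verts G)"

definition finite_graph :: "('v, 'e) graph \<Rightarrow> bool" where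
  "finite_graph G \<longleftrightarrow> wf_graph G \<and> finite (verts G) \<and> finite (edges G)"

definition subgraph :: "('v, 'e) graph \<Rightarrow> ('v, 'e) graph \<Rightarrow> bool" where
  "subgraph H G \<longleftrightarrow> wf_graph H \<and> verts H \<subseteq> verts G \<and> edges H \<subseteq> edges G \<and>
     (\<forall>e\<in>edges H. src H e = src G e \<and> tgt H e = tgt G e)"

definition graph_iso_via ::
  "('v \<Rightarrow> 'w) \<Rightarrow> ('e \<Rightarrow> 'f) \<Rightarrow> ('v, 'e) graph \<Rightarrow> ('w, 'f) graph \<Rightarrow> bool" where
  "graph_iso_via f g G H \<longleftrightarrow>
     bij_betw f (verts G) (verts H) \<and> bij_betw g (edges G) (edges H) \<and>
     (\<forall>e\<in>edges G. f (src G e) = src H (g e) \<and> f (tgt G e) = tgt H (g e))"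

definition isomorphic :: "('v, 'e) graph \<Rightarrow> ('w, 'f) graph \<Rightarrow> bool" where
  "isomorphic G H \<longleftrightarrow> (\<exists>f g. graph_iso_via f g G H)"

definition automorphism :: "('v, 'e) graph \<Rightarrow> ('v \<Rightarrow> 'v) \<Rightarrow> ('e \<Rightarrow> 'e) \<Rightarrow> bool" where
  "automorphism G f g \<longleftrightarrow> graph_iso_via f g G G"

definition aut_invariant_verts :: "('v, 'e) graph \<Rightarrow> 'v set \<Rightarrow> bool" where
  "aut_invariant_verts G Y \<longleftrightarrow> (\<forall>f g. automorphism G f g \<longrightarrow> f ` Y = Y)"

definition aut_invariant_edges :: "('v, 'e) graph \<Rightarrow> 'e set \<Rightarrow> bool" where
  "aut_invariant_edges G Y \<longleftrightarrow> (\<forall>f g. automorphism G f g \<longrightarrow> g ` Y = Y)"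

end

theory Submission imports Defs begin

definition hits :: "'a set set \<Rightarrow> 'a set \<Rightarrow> bool" where
  "hits \<E> X \<longleftrightarrow> (\<forall>E\<in>\<E>. E \<inter> X \<noteq> {})"

lemma count_card: "finite A \<Longrightarrow> (\<Sum>v\<in>A. if v \<in> X then 1 else 0::nat) = card (A \<inter> X)"
  by (simp add: sum.If_cases Int_def)

lemma minimal_finite:
  assumes "\<forall>E\<in>\<E>. finite E"
  shows "finite {X. finite X \<and> card X \<le> k \<and> hits \<E> X \<and> (\<forall>Z. Z \<subset> X \<longrightarrow> \<not> hits \<E> Z)}"
  using assms
proof (induction k arbitrary: \<E>)
  case 0
  have "{X. finite X \<and> card X \<le> 0 \<and> hits \<E> X \<and> (\<forall>Z. Z \<subset> X \<longrightarrow> \<not> hits \<E> Z)} \<subseteq> {{}}"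
    by auto
  then show ?case using finite_subset by blast
next
  case (Suc k)
  show ?case
  proof (cases "\<E> = {}")
    case True
    have "{X. finite X \<and> card X \<le> Suc k \<and> hits \<E> X \<and> (\<forall>Z. Z \<subset> X \<longrightarrow> \<not> hits \<E> Z)} \<subseteq> {{}}"
    proof
      fix X assume X: "X \<in> {X. finite X \<and> card X \<le> Suc k \<and> hits \<E> X \<and> (\<forall>Z. Z \<subset> X \<longrightarrow> \<not> hits \<E> Z)}"
      have "hits \<E> {}" using True by (simp add: hits_def)
      then have "\<not> {} \<subset> X" using X by blast
      then show "X \<in> {{}}" by blast
    qed
    then show ?thesis using finite_subset by blast
  next
    case False
    then obtain E where E: "E \<in> \<E>" by blast
    define S where "S v = {X. finite X \<and> card X \<le> k \<and> hits {E'\<in>\<E>. v \<notin> E'} X \<and>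
        (\<forall>Z. Z \<subset> X \<longrightarrow> \<not> hits {E'\<in>\<E>. v \<notin> E'} Z)}" for v
    have fS: "finite (S v)" for v unfolding S_def by (rule Suc.IH) (use Suc.prems in auto)
    have "{X. finite X \<and> card X \<le> Suc k \<and> hits \<E> X \<and> (\<forall>Z. Z \<subset> X \<longrightarrow> \<not> hits \<E> Z)}
        \<subseteq> (\<Union>v\<in>E. insert v ` S v)"
    proof
      fix X assume X: "X \<in> {X. finite X \<and> card X \<le> Suc k \<and> hits \<E> X \<and> (\<forall>Z. Z \<subset> X \<longrightarrow> \<not> hits \<E> Z)}"
      then obtain v where v: "v \<in> E" "v \<in> X" using E unfolding hits_def by blast
      have "X - {v} \<in> S v"
        unfolding S_def
      proof (intro CollectI conjI allI impI)
        show "finite (X - {v})" using X by auto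
        show "card (X - {v}) \<le> k" using X v by auto
        show "hits {E' \<in> \<E>. v \<notin> E'} (X - {v})" using X unfolding hits_def by blast
        fix Z assume Z: "Z \<subset> X - {v}"
        show "\<not> hits {E' \<in> \<E>. v \<notin> E'} Z"
        proof
          assume h: "hits {E' \<in> \<E>. v \<notin> E'} Z"
          have "hits \<E> (insert v Z)" using h unfolding hits_def by blast
          moreover have "insert v Z \<subset> X" using Z v by blast
          ultimately show False using X by blast
        qed
      qed
      moreover have "X = insert v (X - {v})" using v by blast
      ultimately show "X \<in> (\<Union>v\<in>E. insert v ` S v)" using v by blast
    qed
    moreover have "finite (\<Union>v\<in>E. insert v ` S v)"
      using Suc.prems E fS by auto
    ultimately show ?thesis using finite_subset by blast
  qed
qed

lemma invariant_hitting:
  fixes U :: "'a set" and \<E> :: "'a set set" and P :: "('a \<Rightarrow> 'a) \<Rightarrow> bool"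
  assumes EU: "\<forall>E\<in>\<E>. E \<subseteq> U" and Efin: "\<forall>E\<in>\<E>. finite E" and Er: "\<forall>E\<in>\<E>. card E \<le> r"
    and Pbij: "\<And>f. P f \<Longrightarrow> bij_betw f U U"
    and Pimg: "\<And>f E. P f \<Longrightarrow> E \<in> \<E> \<Longrightarrow> f ` E \<in> \<E>"
    and Pinv: "\<And>f. P f \<Longrightarrow> P (inv_into U f)"
    and X0: "X0 \<subseteq> U" "finite X0" "hits \<E> X0"
  shows "\<exists>Y. Y \<subseteq> U \<and> finite Y \<and> (\<forall>f. P f \<longrightarrow> f ` Y = Y) \<and> hits \<E> Y \<and> card Y \<le> card X0 * r"
proof -
  define good where "good X \<longleftrightarrow> X \<subseteq> U \<and> finite X \<and> hits \<E> X" for X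
  define \<tau> where "\<tau> = (LEAST m. \<exists>X. good X \<and> card X = m)"
  have ex: "\<exists>X. good X \<and> card X = \<tau>"
    unfolding \<tau>_def by (rule LeastI_ex) (use X0 good_def in blast)
  have \<tau>le: "\<tau> \<le> card X0" unfolding \<tau>_def by (rule Least_le) (use X0 good_def in blast)
  have \<tau>min: "\<tau> \<le> card X" if "good X" for X unfolding \<tau>_def by (rule Least_le) (use that in blast)
  define T where "T = {X. good X \<and> card X = \<tau>}"
  have Tne: "T \<noteq> {}" using ex T_def by blast
  have "T \<subseteq> {X. finite X \<and> card X \<le> \<tau> \<and> hits \<E> X \<and> (\<forall>Z. Z \<subset> X \<longrightarrow> \<not> hits \<E> Z)}"
  proof
    fix X assume X: "X \<in> T"
    have "\<not> hits \<E> Z" if Z: "Z \<subset> X" for Z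
    proof
      assume "hits \<E> Z"
      then have "good Z" using X Z unfolding T_def good_def using finite_subset by auto
      then have "\<tau> \<le> card Z" by (rule \<tau>min)
      moreover have "card Z < card X" using X Z unfolding T_def good_def by (auto intro: psubset_card_mono)
      ultimately show False using X T_def by auto
    qed
    then show "X \<in> {X. finite X \<and> card X \<le> \<tau> \<and> hits \<E> X \<and> (\<forall>Z. Z \<subset> X \<longrightarrow> \<not> hits \<E> Z)}"
      using X unfolding T_def good_def by auto
  qed
  then have Tfin: "finite T" using minimal_finite[OF Efin] finite_subset by blast
  have TU: "X \<subseteq> U" "finite X" "card X = \<tau>" "hits \<E> X" if "X \<in> T" for X
    using that unfolding T_def good_def by auto
  have hits_img: "hits \<E> (f ` Z)" if Pf: "P f" and hZ: "hits \<E> Z" for f Z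
    unfolding hits_def
  proof
    fix E assume E: "E \<in> \<E>"
    have "inv_into U f ` E \<in> \<E>" using Pimg[OF Pinv[OF \<open>P f\<close>] E] .
    then obtain z where z: "z \<in> Z" "z \<in> inv_into U f ` E" using hZ unfolding hits_def by blast
    then obtain e where e: "e \<in> E" "z = inv_into U f e" by blast
    have "e \<in> f ` U" using e EU E Pbij[OF \<open>P f\<close>] by (auto simp: bij_betw_def)
    then have "f z = e" using e by (simp add: f_inv_into_f)
    then show "E \<inter> f ` Z \<noteq> {}" using z e by blast
  qed
  have T_img: "f ` X \<in> T" if "P f" "X \<in> T" for f X
  proof -
    have b: "bij_betw f U U" using Pbij[OF \<open>P f\<close>] .
    have "inj_on f X" using b TU[OF \<open>X \<in> T\<close>] by (meson bij_betw_def inj_on_subset)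
    then have "card (f ` X) = \<tau>" using TU[OF \<open>X \<in> T\<close>] by (simp add: card_image)
    moreover have "f ` X \<subseteq> U" using b TU[OF \<open>X \<in> T\<close>] by (auto simp: bij_betw_def)
    ultimately show ?thesis using hits_img[OF \<open>P f\<close>] TU[OF \<open>X \<in> T\<close>] unfolding T_def good_def by auto
  qed
  have T_bij: "image f ` T = T" if "P f" for f
  proof (rule endo_inj_surj[OF Tfin])
    show "image f ` T \<subseteq> T" using T_img[OF that] by blast
    have "inj_on f U" using Pbij[OF that] by (simp add: bij_betw_def)
    then show "inj_on (image f) T"
      by (smt (verit, best) TU(1) inj_on_def inj_on_image_eq_iff)
  qed
  define c where "c v = (\<Sum>X\<in>T. if v \<in> X then 1 else 0::nat)" for v
  have c_inv: "c (f v) = c v" if "P f" "v \<in> U" for f v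
  proof -
    have inj: "inj_on f U" using Pbij[OF that(1)] by (simp add: bij_betw_def)
    have ij: "inj_on (image f) T"
      using inj by (smt (verit, best) TU(1) inj_on_def inj_on_image_eq_iff)
    have "c (f v) = (\<Sum>X\<in>image f ` T. if f v \<in> X then 1 else 0)"
      unfolding c_def using T_bij[OF that(1)] by simp
    also have "\<dots> = (\<Sum>X\<in>T. if f v \<in> f ` X then 1 else 0)"
      by (simp add: sum.reindex[OF ij])
    also have "\<dots> = c v" unfolding c_def
      proof (rule sum.cong)
      fix X assume "X \<in> T"
      then show "(if f v \<in> f ` X then 1 else 0) = (if v \<in> X then 1 else 0)"
        using inj_on_image_mem_iff[OF inj that(2) TU(1)] by simp
    qed simp
    finally show ?thesis .
  qed
  have sum_c: "(\<Sum>v\<in>A. c v) = (\<Sum>X\<in>T. card (A \<inter> X))" if "finite A" for A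
  proof -
    have "(\<Sum>v\<in>A. c v) = (\<Sum>X\<in>T. \<Sum>v\<in>A. if v \<in> X then 1 else 0)"
      unfolding c_def by (rule sum.swap)
    also have "\<dots> = (\<Sum>X\<in>T. card (A \<inter> X))" using count_card[OF that] by simp
    finally show ?thesis .
  qed
  define Y where "Y = {v\<in>U. card T \<le> r * c v}"
  have cT: "card T > 0" using Tfin Tne by (simp add: card_gt_0_iff)
  have YT: "Y \<subseteq> \<Union>T"
  proof
    fix v assume v: "v \<in> Y"
    then have "c v \<noteq> 0" using cT unfolding Y_def by (metis (no_types, lifting) mem_Collect_eq mult_0_right not_le)
    then obtain X where "X \<in> T" "v \<in> X" unfolding c_def
      by (metis (mono_tags, lifting) sum.neutral)
    then show "v \<in> \<Union>T" by blast
  qed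
  have Yfin: "finite Y" using YT Tfin TU(2) by (meson finite_Union finite_subset)
  have YU: "Y \<subseteq> U" unfolding Y_def by auto
  have Yinv: "f ` Y = Y" if "P f" for f
  proof
    have b: "bij_betw f U U" using Pbij[OF that] .
    show "f ` Y \<subseteq> Y"
    proof
      fix w assume "w \<in> f ` Y"
      then obtain v where v: "v \<in> Y" "w = f v" by blast
      then have "v \<in> U" unfolding Y_def by auto
      then show "w \<in> Y" using v c_inv[OF that] b unfolding Y_def by (auto simp: bij_betw_def)
    qed
    show "Y \<subseteq> f ` Y"
    proof
      fix v assume v: "v \<in> Y"
      then have "v \<in> U" unfolding Y_def by auto
      then obtain u where u: "u \<in> U" "v = f u" using b by (auto simp: bij_betw_def)
      then have "u \<in> Y" using v c_inv[OF that u(1)] unfolding Y_def by auto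
      then show "v \<in> f ` Y" using u by blast
    qed
  qed
  have Yhits: "hits \<E> Y"
    unfolding hits_def
  proof
    fix E assume E: "E \<in> \<E>"
    have fE: "finite E" using Efin E by auto
    have neE: "E \<noteq> {}" using X0 E unfolding hits_def by auto
    show "E \<inter> Y \<noteq> {}"
    proof
      assume dis: "E \<inter> Y = {}"
      have lt: "r * c v < card T" if "v \<in> E" for v
        proof -
        have "v \<in> U" using that E EU by blast
        then have "v \<notin> Y \<Longrightarrow> r * c v < card T" unfolding Y_def by simp
        then show ?thesis using dis that by blast
      qed
      have "card T = (\<Sum>X\<in>T. 1)" by simp
      also have "\<dots> \<le> (\<Sum>X\<in>T. card (E \<inter> X))"
      proof (rule sum_mono)
        fix X assume "X \<in> T"
        then have "E \<inter> X \<noteq> {}" using TU(4) E unfolding hits_def by blast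
        then show "1 \<le> card (E \<inter> X)" using fE by (simp add: Suc_leI card_gt_0_iff)
      qed
      also have "\<dots> = (\<Sum>v\<in>E. c v)" using sum_c[OF fE] by simp
      finally have "r * card T \<le> r * (\<Sum>v\<in>E. c v)" by simp
      also have "\<dots> = (\<Sum>v\<in>E. r * c v)" by (simp add: sum_distrib_left)
      also have "\<dots> < (\<Sum>v\<in>E. card T)" using sum_strict_mono[OF fE neE lt] .
      also have "\<dots> = card E * card T" by simp
      also have "\<dots> \<le> r * card T" using Er E by simp
      finally show False by simp
    qed
  qed
  have "card Y * card T = (\<Sum>v\<in>Y. card T)" by simp
  also have "\<dots> \<le> (\<Sum>v\<in>Y. r * c v)" by (rule sum_mono) (simp add: Y_def)
  also have "\<dots> = r * (\<Sum>v\<in>Y. c v)" by (simp add: sum_distrib_left)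
  also have "\<dots> = r * (\<Sum>X\<in>T. card (Y \<inter> X))" using sum_c[OF Yfin] by simp
  also have "\<dots> \<le> r * (\<Sum>X\<in>T. \<tau>)"
  proof -
    have "(\<Sum>X\<in>T. card (Y \<inter> X)) \<le> (\<Sum>X\<in>T. \<tau>)"
      by (rule sum_mono) (metis TU(2,3) card_mono inf_le2)
    then show ?thesis by simp
  qed
  also have "\<dots> = (r * \<tau>) * card T" by simp
  finally have "card Y \<le> r * \<tau>" using cT by simp
  also have "\<dots> \<le> card X0 * r" using \<tau>le by simp
  finally show ?thesis using YU Yfin Yinv Yhits by blast
qed


lemma iso_sym:
  assumes "graph_iso_via f g A B" "wf_graph A"
  shows "graph_iso_via (inv_into (verts A) f) (inv_into (edges A) g) B A"
  unfolding graph_iso_via_def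
proof (intro conjI ballI)
  show "bij_betw (inv_into (verts A) f) (verts B) (verts A)"
    using assms(1) unfolding graph_iso_via_def by (simp add: bij_betw_inv_into)
  show "bij_betw (inv_into (edges A) g) (edges B) (edges A)"
    using assms(1) unfolding graph_iso_via_def by (simp add: bij_betw_inv_into)
  fix e' assume e': "e' \<in> edges B"
  define e where "e = inv_into (edges A) g e'"
  have bg: "bij_betw g (edges A) (edges B)" and bf: "bij_betw f (verts A) (verts B)"
    using assms(1) unfolding graph_iso_via_def by auto
  have e: "e \<in> edges A" "g e = e'" using e' bg unfolding e_def
    by (auto simp: bij_betw_def inv_into_into f_inv_into_f)
  have s: "f (src A e) = src B e'" "f (tgt A e) = tgt B e'"
    using assms(1) e unfolding graph_iso_via_def by auto
  have inA: "src A e \<in> verts A" "tgt A e \<in> verts A" using assms(2) e unfolding wf_graph_def by auto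
  have inj: "inj_on f (verts A)" using bf by (simp add: bij_betw_def)
  show "inv_into (verts A) f (src B e') = src A (inv_into (edges A) g e')"
    using s(1) inA(1) inv_into_f_f[OF inj] e_def by metis
  show "inv_into (verts A) f (tgt B e') = tgt A (inv_into (edges A) g e')"
    using s(2) inA(2) inv_into_f_f[OF inj] e_def by metis
qed

lemma iso_trans:
  assumes "graph_iso_via f1 g1 A B" "graph_iso_via f2 g2 B C"
  shows "graph_iso_via (f2 \<circ> f1) (g2 \<circ> g1) A C"
proof -
  have "bij_betw (f2 \<circ> f1) (verts A) (verts C)" "bij_betw (g2 \<circ> g1) (edges A) (edges C)"
    using assms unfolding graph_iso_via_def by (auto intro: bij_betw_trans)
  moreover have "\<forall>e\<in>edges A. (f2 \<circ> f1) (src A e) = src C ((g2 \<circ> g1) e) \<and> (f2 \<circ> f1) (tgt A e) = tgt C ((g2 \<circ> g1) e)"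
    using assms unfolding graph_iso_via_def bij_betw_def by auto
  ultimately show ?thesis unfolding graph_iso_via_def by blast
qed

lemma copy_image:
  assumes aut: "automorphism \<Gamma> f g" and wf: "wf_graph \<Gamma>"
    and sub: "subgraph H \<Gamma>" and iso: "isomorphic H K"
  shows "\<exists>H'. subgraph H' \<Gamma> \<and> isomorphic H' K \<and> verts H' = f ` verts H \<and> edges H' = g ` edges H"
proof -
  define H' where "H' = \<lparr>verts = f ` verts H, edges = g ` edges H, src = src \<Gamma>, tgt = tgt \<Gamma>\<rparr>"
  have A: "bij_betw f (verts \<Gamma>) (verts \<Gamma>)" "bij_betw g (edges \<Gamma>) (edges \<Gamma>)"
    "\<forall>e\<in>edges \<Gamma>. f (src \<Gamma> e) = src \<Gamma> (g e) \<and> f (tgt \<Gamma> e) = tgt \<Gamma> (g e)"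
    using aut unfolding automorphism_def graph_iso_via_def by auto
  have S: "wf_graph H" "verts H \<subseteq> verts \<Gamma>" "edges H \<subseteq> edges \<Gamma>"
    "\<forall>e\<in>edges H. src H e = src \<Gamma> e \<and> tgt H e = tgt \<Gamma> e"
    using sub unfolding subgraph_def by auto
  have sub': "subgraph H' \<Gamma>"
    unfolding subgraph_def wf_graph_def H'_def
  proof (intro conjI ballI)
    fix e' assume "e' \<in> edges \<lparr>verts = f ` verts H, edges = g ` edges H, src = src \<Gamma>, tgt = tgt \<Gamma>\<rparr>"
    then obtain e where e: "e \<in> edges H" "e' = g e" by auto
    have "src H e \<in> verts H" "tgt H e \<in> verts H" using S(1) e unfolding wf_graph_def by auto
    then show "src \<lparr>verts = f ` verts H, edges = g ` edges H, src = src \<Gamma>, tgt = tgt \<Gamma>\<rparr> e'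
          \<in> verts \<lparr>verts = f ` verts H, edges = g ` edges H, src = src \<Gamma>, tgt = tgt \<Gamma>\<rparr>"
      "tgt \<lparr>verts = f ` verts H, edges = g ` edges H, src = src \<Gamma>, tgt = tgt \<Gamma>\<rparr> e'
          \<in> verts \<lparr>verts = f ` verts H, edges = g ` edges H, src = src \<Gamma>, tgt = tgt \<Gamma>\<rparr>"
      using A(3) S e by force+
  next
    show "verts \<lparr>verts = f ` verts H, edges = g ` edges H, src = src \<Gamma>, tgt = tgt \<Gamma>\<rparr> \<subseteq> verts \<Gamma>"
      using A(1) S(2) by (auto simp: bij_betw_def)
    show "edges \<lparr>verts = f ` verts H, edges = g ` edges H, src = src \<Gamma>, tgt = tgt \<Gamma>\<rparr> \<subseteq> edges \<Gamma>"
      using A(2) S(3) by (auto simp: bij_betw_def)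
  qed auto
  have isoHH': "graph_iso_via f g H H'"
    unfolding graph_iso_via_def H'_def
  proof (intro conjI ballI)
    show "bij_betw f (verts H) (verts \<lparr>verts = f ` verts H, edges = g ` edges H, src = src \<Gamma>, tgt = tgt \<Gamma>\<rparr>)"
      using A(1) S(2) by (auto simp: bij_betw_def intro: inj_on_subset)
    show "bij_betw g (edges H) (edges \<lparr>verts = f ` verts H, edges = g ` edges H, src = src \<Gamma>, tgt = tgt \<Gamma>\<rparr>)"
      using A(2) S(3) by (auto simp: bij_betw_def intro: inj_on_subset)
  qed (use A(3) S in auto)
  obtain f1 g1 where i1: "graph_iso_via f1 g1 H K" using iso unfolding isomorphic_def by blast
  have "graph_iso_via (f1 \<circ> inv_into (verts H) f) (g1 \<circ> inv_into (edges H) g) H' K"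
    by (rule iso_trans[OF iso_sym[OF isoHH' S(1)] i1])
  then have "isomorphic H' K" unfolding isomorphic_def by blast
  then show ?thesis using sub' H'_def by auto
qed

lemma aut_inv:
  assumes "automorphism \<Gamma> f g" "wf_graph \<Gamma>"
  shows "automorphism \<Gamma> (inv_into (verts \<Gamma>) f) (inv_into (edges \<Gamma>) g)"
  using iso_sym assms unfolding automorphism_def by blast

lemma iso_card:
  assumes "isomorphic H K"
  shows "card (verts H) = card (verts K)" "card (edges H) = card (edges K)"
    "finite (verts K) \<Longrightarrow> finite (verts H)" "finite (edges K) \<Longrightarrow> finite (edges H)"
  using assms unfolding isomorphic_def graph_iso_via_def
  by (auto simp: bij_betw_same_card bij_betw_finite)

theorem mainTheorem3:
  fixes \<Gamma> :: "('v, 'e) graph"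
    and K :: "nat \<Rightarrow> ('w, 'f) graph"
    and n :: nat
  assumes "wf_graph \<Gamma>"
    and "\<forall>i<n. finite_graph (K i)"
  shows
    "(\<forall>X. X \<subseteq> verts \<Gamma> \<and> finite X \<and>
         (\<forall>H i. subgraph H \<Gamma> \<and> i < n \<and> isomorphic H (K i) \<longrightarrow> verts H \<inter> X \<noteq> {})
      \<longrightarrow> (\<exists>Y. Y \<subseteq> verts \<Gamma> \<and> finite Y \<and> aut_invariant_verts \<Gamma> Y \<and>
             (\<forall>H i. subgraph H \<Gamma> \<and> i < n \<and> isomorphic H (K i) \<longrightarrow> verts H \<inter> Y \<noteq> {}) \<and>
             card Y \<le> card X * (MAX i\<in>{..<n}. card (verts (K i)))))
     \<and>
     (\<forall>X. X \<subseteq> edges \<Gamma> \<and> finite X \<and>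
         (\<forall>H i. subgraph H \<Gamma> \<and> i < n \<and> isomorphic H (K i) \<longrightarrow> edges H \<inter> X \<noteq> {})
      \<longrightarrow> (\<exists>Y. Y \<subseteq> edges \<Gamma> \<and> finite Y \<and> aut_invariant_edges \<Gamma> Y \<and>
             (\<forall>H i. subgraph H \<Gamma> \<and> i < n \<and> isomorphic H (K i) \<longrightarrow> edges H \<inter> Y \<noteq> {}) \<and>
             card Y \<le> card X * (MAX i\<in>{..<n}. card (edges (K i)))))"
proof (intro conjI allI impI)
  note wf = assms(1)
  fix X :: "'v set"
  assume X: "X \<subseteq> verts \<Gamma> \<and> finite X \<and>
         (\<forall>H i. subgraph H \<Gamma> \<and> i < n \<and> isomorphic H (K i) \<longrightarrow> verts H \<inter> X \<noteq> {})"
  show "\<exists>Y. Y \<subseteq> verts \<Gamma> \<and> finite Y \<and> aut_invariant_verts \<Gamma> Y \<and>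
             (\<forall>H i. subgraph H \<Gamma> \<and> i < n \<and> isomorphic H (K i) \<longrightarrow> verts H \<inter> Y \<noteq> {}) \<and>
             card Y \<le> card X * (MAX i\<in>{..<n}. card (verts (K i)))"
  proof (cases "n = 0")
    case True
    then show ?thesis by (rule_tac x="{}" in exI) (auto simp: aut_invariant_verts_def)
  next
    case False
    define \<E> where "\<E> = {verts H |H. \<exists>i. subgraph H \<Gamma> \<and> i < n \<and> isomorphic H (K i)}"
    define r where "r = (MAX i\<in>{..<n}. card (verts (K i)))"
    have Er: "\<forall>E\<in>\<E>. card E \<le> r"
    proof
      fix E assume "E \<in> \<E>"
      then obtain H :: "('v, 'e) graph" and i where H: "E = verts H" "i < n" "isomorphic H (K i)" unfolding \<E>_def by blast
      have "card (verts (K i)) \<le> r" unfolding r_def using H(2) by (intro Max_ge) auto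
      then show "card E \<le> r" using iso_card(1)[OF H(3)] H(1) by simp
    qed
    have Efin: "\<forall>E\<in>\<E>. finite E"
      using assms(2) iso_card(3) unfolding \<E>_def finite_graph_def by blast
    have EU: "\<forall>E\<in>\<E>. E \<subseteq> verts \<Gamma>" unfolding \<E>_def subgraph_def by blast
    have hX: "hits \<E> X" using X unfolding hits_def \<E>_def by blast
    obtain Y where Y: "Y \<subseteq> verts \<Gamma>" "finite Y" "\<forall>f. (\<exists>g. automorphism \<Gamma> f g) \<longrightarrow> f ` Y = Y"
      "hits \<E> Y" "card Y \<le> card X * r"
    proof (rule exE[OF invariant_hitting[OF EU Efin Er, of "\<lambda>f. \<exists>g. automorphism \<Gamma> f g" X]])
      show "\<And>f. \<exists>g. automorphism \<Gamma> f g \<Longrightarrow> bij_betw f (verts \<Gamma>) (verts \<Gamma>)"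
        unfolding automorphism_def graph_iso_via_def by blast
      show "\<And>f E. \<exists>g. automorphism \<Gamma> f g \<Longrightarrow> E \<in> \<E> \<Longrightarrow> f ` E \<in> \<E>"
      proof -
        fix f E assume "\<exists>g. automorphism \<Gamma> f g" "E \<in> \<E>"
        then obtain g and H :: "('v, 'e) graph" and i where a: "automorphism \<Gamma> f g" and H: "E = verts H" "subgraph H \<Gamma>" "i < n" "isomorphic H (K i)"
          unfolding \<E>_def by blast
        from copy_image[OF a wf H(2) H(4)] H show "f ` E \<in> \<E>" unfolding \<E>_def by blast
      qed
      show "\<And>f. \<exists>g. automorphism \<Gamma> f g \<Longrightarrow> \<exists>g. automorphism \<Gamma> (inv_into (verts \<Gamma>) f) g"
        using aut_inv wf by blast
    qed (use X hX in auto)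
    show ?thesis
    proof (intro exI conjI)
      show "aut_invariant_verts \<Gamma> Y" using Y(3) unfolding aut_invariant_verts_def by blast
      show "\<forall>H i. subgraph H \<Gamma> \<and> i < n \<and> isomorphic H (K i) \<longrightarrow> verts H \<inter> Y \<noteq> {}"
        using Y(4) unfolding hits_def \<E>_def by blast
    qed (use Y r_def in auto)
  qed
next
  note wf = assms(1)
  fix X :: "'e set"
  assume X: "X \<subseteq> edges \<Gamma> \<and> finite X \<and>
         (\<forall>H i. subgraph H \<Gamma> \<and> i < n \<and> isomorphic H (K i) \<longrightarrow> edges H \<inter> X \<noteq> {})"
  show "\<exists>Y. Y \<subseteq> edges \<Gamma> \<and> finite Y \<and> aut_invariant_edges \<Gamma> Y \<and>
             (\<forall>H i. subgraph H \<Gamma> \<and> i < n \<and> isomorphic H (K i) \<longrightarrow> edges H \<inter> Y \<noteq> {}) \<and>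
             card Y \<le> card X * (MAX i\<in>{..<n}. card (edges (K i)))"
  proof (cases "n = 0")
    case True
    then show ?thesis by (rule_tac x="{}" in exI) (auto simp: aut_invariant_edges_def)
  next
    case False
    define \<E> where "\<E> = {edges H |H. \<exists>i. subgraph H \<Gamma> \<and> i < n \<and> isomorphic H (K i)}"
    define r where "r = (MAX i\<in>{..<n}. card (edges (K i)))"
    have Er: "\<forall>E\<in>\<E>. card E \<le> r"
    proof
      fix E assume "E \<in> \<E>"
      then obtain H :: "('v, 'e) graph" and i where H: "E = edges H" "i < n" "isomorphic H (K i)" unfolding \<E>_def by blast
      have "card (edges (K i)) \<le> r" unfolding r_def using H(2) by (intro Max_ge) auto
      then show "card E \<le> r" using iso_card(2)[OF H(3)] H(1) by simp
    qed
    have Efin: "\<forall>E\<in>\<E>. finite E"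
      using assms(2) iso_card(4) unfolding \<E>_def finite_graph_def by blast
    have EU: "\<forall>E\<in>\<E>. E \<subseteq> edges \<Gamma>" unfolding \<E>_def subgraph_def by blast
    have hX: "hits \<E> X" using X unfolding hits_def \<E>_def by blast
    obtain Y where Y: "Y \<subseteq> edges \<Gamma>" "finite Y" "\<forall>g. (\<exists>f. automorphism \<Gamma> f g) \<longrightarrow> g ` Y = Y"
      "hits \<E> Y" "card Y \<le> card X * r"
    proof (rule exE[OF invariant_hitting[OF EU Efin Er, of "\<lambda>g. \<exists>f. automorphism \<Gamma> f g" X]])
      show "\<And>g. \<exists>f. automorphism \<Gamma> f g \<Longrightarrow> bij_betw g (edges \<Gamma>) (edges \<Gamma>)"
        unfolding automorphism_def graph_iso_via_def by blast
      show "\<And>g E. \<exists>f. automorphism \<Gamma> f g \<Longrightarrow> E \<in> \<E> \<Longrightarrow> g ` E \<in> \<E>"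
      proof -
        fix g E assume "\<exists>f. automorphism \<Gamma> f g" "E \<in> \<E>"
        then obtain f and H :: "('v, 'e) graph" and i where a: "automorphism \<Gamma> f g" and H: "E = edges H" "subgraph H \<Gamma>" "i < n" "isomorphic H (K i)"
          unfolding \<E>_def by blast
        from copy_image[OF a wf H(2) H(4)] H show "g ` E \<in> \<E>" unfolding \<E>_def by blast
      qed
      show "\<And>g. \<exists>f. automorphism \<Gamma> f g \<Longrightarrow> \<exists>f. automorphism \<Gamma> f (inv_into (edges \<Gamma>) g)"
        using aut_inv wf by blast
    qed (use X hX in auto)
    show ?thesis
    proof (intro exI conjI)
      show "aut_invariant_edges \<Gamma> Y" using Y(3) unfolding aut_invariant_edges_def by blast
      show "\<forall>H i. subgraph H \<Gamma> \<and> i < n \<and> isomorphic H (K i) \<longrightarrow> edges H \<inter> Y \<noteq> {}"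
        using Y(4) unfolding hits_def \<E>_def by blast
    qed (use Y r_def in auto)
  qed
qed

end
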